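(* Let $w\in\mathcal{G}$, $\varepsilon>0$, $k\ge2$, and let $S\subseteq w\mathcal{G}$ be a strongly $k$-product-free set that is $\varepsilon$-regular in $w\mathcal{G}$. Let $d=\bar{d}_{w\mathcal{G}}(S)$. Then \[ d\left(1+\frac{d}{d+2\varepsilon}+\cdots+\left(\frac{d}{d+2\varepsilon}\right)^{k-1}\right)\le 1.\]
   Context: $\mathcal{A}$ is a finite alphabet with $|\mathcal{A}|\ge2$, $\mathcal{F}$ the free group over $\mathcal{A}$, elements identified with reduced words, $|w|$ the reduced length. Fix $x,y\in\mathcal{A}\cup\mathcal{A}^{-1}$ with $x\ne y^{-1}$, and let $\mathcal{G}$ be the subsemigroup of $\mathcal{F}$ consisting of reduced words beginning with $x$ and ending with $y$, together with the empty word. For $v\in\mathcal{G}$, $v\mathcal{G}=\{v\alpha:\alpha\in\mathcal{G}\}\subseteq\mathcal{G}$. The measure $\mu$ on $\mathcal{F}$ is $\mu(\{u\})=\frac{1}{2|\mathcal{A}|(2|\mathcal{A}|-1)^{|u|-1}}$ for nonempty $u$, extended additively. For $A\subseteq\mathcal{F}$, $A_{\le n}=\{u\in A:|u|\le n\}$; for $A\subseteq\mathcal{H}\subseteq\mathcal{F}$, $\bar{d}_{\mathcal{H}}(A)=\limsup_{n\to\infty}\mu(A_{\le n})/\mu(\mathcal{H}_{\le n})$. A set $S\subseteq w\mathcal{G}$ is $\varepsilon$-regular in $w\mathcal{G}$ if $\bar{d}_{ww'\mathcal{G}}(S\cap ww'\mathcal{G})\le\bar{d}_{w\mathcal{G}}(S)+\varepsilon$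 for all $w'\in\mathcal{G}$. A set is strongly $k$-product-free if for every $2\le\ell\le k$ there are no $x_1,\dots,x_\ell,z$ in it with $x_1\cdots x_\ell=z$. *)

theory Defs
  imports "HOL-Analysis.Analysis" "HOL-Library.Liminf_Limsup"
begin

text \<open>Letters: a generator paired with a flag; (a, True) is a, (a, False) is a inverse.
  Free group elements are reduced words (lists of letters).\<close>

type_synonym 'a letter = "'a \<times> bool"

definition inv_letter :: "'a letter \<Rightarrow> 'a letter" where
  "inv_letter l = (fst l, \<not> snd l)"

definition reduced :: "'a letter list \<Rightarrow> bool" where
  "reduced u \<longleftrightarrow> successively (\<lambda>p q. q \<noteq> inv_letter p) u"

definition freegrp :: "'a letter list set" where
  "freegrp = {u. reduced u}"

fun push :: "'a letter \<Rightarrow> 'a letter list \<Rightarrow> 'a letter list" where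
  "push l [] = [l]"
| "push l (m # ms) = (if m = inv_letter l then ms else l # m # ms)"

definition reduce :: "'a letter list \<Rightarrow> 'a letter list" where
  "reduce u = foldr push u []"

definition fmult :: "'a letter list \<Rightarrow> 'a letter list \<Rightarrow> 'a letter list" where
  "fmult u v = reduce (u @ v)"

definition fprod :: "'a letter list list \<Rightarrow> 'a letter list" where
  "fprod xs = foldr fmult xs []"

definition semiG :: "'a letter \<Rightarrow> 'a letter \<Rightarrow> 'a letter list set" where
  "semiG x y = {u. reduced u \<and> (u = [] \<or> (hd u = x \<and> last u = y))}"

definition coset :: "'a letter list \<Rightarrow> 'a letter list set \<Rightarrow> 'a letter list set" where
  "coset v H = (\<lambda>\<alpha>. fmult v \<alpha>) ` H"

text \<open>The measure mu (empty word gets weight 0; irrelevant for densities).\<close>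
definition weight :: "'a::finite letter list \<Rightarrow> real" where
  "weight u = (if u = [] then 0
     else 1 / (2 * real CARD('a) * (2 * real CARD('a) - 1) ^ (length u - 1)))"

definition mu :: "'a::finite letter list set \<Rightarrow> real" where
  "mu A = (\<Sum>u\<in>A. weight u)"

definition trunc :: "'a letter list set \<Rightarrow> nat \<Rightarrow> 'a letter list set" where
  "trunc A n = {u \<in> A. length u \<le> n}"

definition upper_density :: "'a::finite letter list set \<Rightarrow> 'a letter list set \<Rightarrow> real" where
  "upper_density H A =
     real_of_ereal (limsup (\<lambda>n. ereal (mu (trunc A n) / mu (trunc H n))))"

definition eps_regular ::
  "'a::finite letter \<Rightarrow> 'a letter \<Rightarrow> real \<Rightarrow> 'a letter list \<Rightarrow> 'a letter list set \<Rightarrow> bool" where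
  "eps_regular x y \<epsilon> w S \<longleftrightarrow> S \<subseteq> coset w (semiG x y) \<and>
     (\<forall>w' \<in> semiG x y.
        upper_density (coset (fmult w w') (semiG x y)) (S \<inter> coset (fmult w w') (semiG x y))
          \<le> upper_density (coset w (semiG x y)) S + \<epsilon>)"

definition strongly_product_free :: "nat \<Rightarrow> 'a letter list set \<Rightarrow> bool" where
  "strongly_product_free k S \<longleftrightarrow>
     (\<forall>l. 2 \<le> l \<and> l \<le> k \<longrightarrow>
        \<not> (\<exists>xs z. length xs = l \<and> set xs \<subseteq> S \<and> z \<in> S \<and> fprod xs = z))"

end

theory Submission
  imports Defs
begin


lemma inv_letter_inv[simp]: "inv_letter (inv_letter l) = l"
  by (simp add: inv_letter_def)

lemma inv_letter_eq_iff: "inv_letter a = b \<longleftrightarrow> a = inv_letter b"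
  by (auto simp: inv_letter_def)

lemma reduced_Nil[simp]: "reduced []" by (simp add: reduced_def)

lemma reduced_Cons: "reduced (a # u) \<longleftrightarrow> reduced u \<and> (u = [] \<or> hd u \<noteq> inv_letter a)"
  unfolding reduced_def by (auto simp: successively_Cons)

lemma reduced_append: "reduced (u @ v) \<longleftrightarrow> reduced u \<and> reduced v \<and> (u = [] \<or> v = [] \<or> hd v \<noteq> inv_letter (last u))"
  unfolding reduced_def by (simp add: successively_append_iff)

lemma reduce_reduced: "reduced u \<Longrightarrow> reduce u = u"
proof (induction u)
  case Nil then show ?case by (simp add: reduce_def)
next
  case (Cons a u)
  then have "reduce u = u" by (simp add: reduced_Cons)
  then have "reduce (a # u) = push a u" by (simp add: reduce_def)
  also have "\<dots> = a # u" using Cons.prems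
    by (cases u) (auto simp: reduced_Cons)
  finally show ?case .
qed

context
  fixes x y :: "'a letter"
  assumes xy: "x \<noteq> inv_letter y"
begin

lemma G_append: "u \<in> semiG x y \<Longrightarrow> v \<in> semiG x y \<Longrightarrow> u @ v \<in> semiG x y"
  using xy by (cases "u = []"; cases "v = []") (auto simp: semiG_def reduced_append inv_letter_eq_iff)

lemma fmult_G: "u \<in> semiG x y \<Longrightarrow> v \<in> semiG x y \<Longrightarrow> fmult u v = u @ v"
  using G_append[of u v] by (simp add: fmult_def semiG_def reduce_reduced)

end

definition cone :: "'a letter \<Rightarrow> 'a letter \<Rightarrow> 'a letter list \<Rightarrow> 'a letter list set" where
  "cone x y v = (\<lambda>a. v @ a) ` semiG x y"

lemma Nil_G[simp]: "[] \<in> semiG x y" by (simp add: semiG_def)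

lemma cone_self: "v \<in> cone x y v"
  unfolding cone_def by (rule image_eqI[of _ _ "[]"]) auto

lemma cone_len: "z \<in> cone x y v \<Longrightarrow> length v \<le> length z"
  unfolding cone_def by auto

lemma cone_take: "z \<in> cone x y v \<Longrightarrow> take (length v) z = v"
  unfolding cone_def by auto

context
  fixes x y :: "'a letter"
  assumes xy: "x \<noteq> inv_letter y"
begin

lemma coset_cone: "v \<in> semiG x y \<Longrightarrow> coset v (semiG x y) = cone x y v"
  unfolding coset_def cone_def using fmult_G[OF xy] by auto

lemma cone_sub_G: "v \<in> semiG x y \<Longrightarrow> cone x y v \<subseteq> semiG x y"
  unfolding cone_def using G_append[OF xy] by auto

lemma cone_trans: "v \<in> cone x y u \<Longrightarrow> cone x y v \<subseteq> cone x y u"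
  unfolding cone_def using G_append[OF xy] by force

lemma cone_append: "v \<in> semiG x y \<Longrightarrow> cone x y (s @ v) = (\<lambda>a. s @ a) ` cone x y v"
  unfolding cone_def by auto

lemma laminar:
  assumes v1: "v1 \<in> semiG x y" and v2: "v2 \<in> semiG x y" and ne: "v2 \<noteq> []"
    and z1: "z \<in> cone x y v1" and z2: "z \<in> cone x y v2" and le: "length v1 \<le> length v2"
  shows "v2 \<in> cone x y v1"
proof -
  obtain a1 where a1: "a1 \<in> semiG x y" "z = v1 @ a1" using z1 unfolding cone_def by auto
  obtain a2 where a2: "a2 \<in> semiG x y" "z = v2 @ a2" using z2 unfolding cone_def by auto
  define b where "b = drop (length v1) v2"
  have v2eq: "v2 = v1 @ b"
    using a1 a2 le unfolding b_def
    by (metis append_eq_append_conv_if append_take_drop_id)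
  have a1eq: "a1 = b @ a2" using a1 a2 v2eq by simp
  have "b \<in> semiG x y"
  proof (cases "b = []")
    case True then show ?thesis by simp
  next
    case False
    have "reduced b" using v2 v2eq by (simp add: semiG_def reduced_append)
    moreover have "hd b = x" using a1 a1eq False by (auto simp: semiG_def)
    moreover have "last b = y" using v2 v2eq False ne by (auto simp: semiG_def)
    ultimately show ?thesis by (simp add: semiG_def)
  qed
  then show ?thesis using v2eq unfolding cone_def by auto
qed

end


definition base :: "'a::finite itself \<Rightarrow> real" where
  "base _ = 2 * real CARD('a) - 1"

lemma card_letters: "card (UNIV :: ('a::finite) letter set) = 2 * CARD('a)"
  by (simp add: card_UNIV_bool)

lemma base_ge1: "base TYPE('a::finite) \<ge> 1"
proof -
  have "CARD('a) \<ge> 1" using finite_UNIV_card_ge_0[where 'a='a] by simp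
  then show ?thesis unfolding base_def by simp
qed

lemma base_pos: "base TYPE('a::finite) > 0" using base_ge1[where 'a='a] by simp

lemma weight_Nil[simp]: "weight [] = 0" by (simp add: weight_def)

lemma weight_form: "(u::'a::finite letter list) \<noteq> [] \<Longrightarrow>
   weight u = 1 / ((base TYPE('a) + 1) * base TYPE('a) ^ (length u - 1))"
  by (simp add: weight_def base_def)

lemma weight_nonneg: "0 \<le> weight (u::'a::finite letter list)"
  using base_pos[where 'a='a] by (cases "u = []") (auto simp: weight_form)

lemma weight_append:
  assumes "a \<noteq> []"
  shows "weight ((s::'a::finite letter list) @ a) = weight a / base TYPE('a) ^ length s"
proof -
  have "length (s @ a) - 1 = length s + (length a - 1)" using assms by (cases a) auto
  then show ?thesis using assms by (simp add: weight_form power_add)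
qed

lemma weight_le: "weight (u::'a::finite letter list) \<le> 1 / base TYPE('a) ^ length u"
proof (cases "u = []")
  case True then show ?thesis using base_pos[where 'a='a] by simp
next
  case False
  let ?b = "base TYPE('a)"
  have b: "?b > 0" by (rule base_pos)
  have eq: "?b ^ length u = ?b * ?b ^ (length u - 1)" using False
    by (cases "length u") auto
  have "?b * ?b ^ (length u - 1) \<le> (?b + 1) * ?b ^ (length u - 1)"
    using b by (intro mult_right_mono) auto
  then show ?thesis using False b by (simp add: weight_form eq frac_le)
qed

lemma finite_trunc: "finite (trunc (A::'a::finite letter list set) n)"
proof -
  have "trunc A n \<subseteq> {xs. set xs \<subseteq> UNIV \<and> length xs \<le> n}" by (auto simp: trunc_def)
  moreover have "finite {xs :: 'a letter list. set xs \<subseteq> UNIV \<and> length xs \<le> n}"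
    by (rule finite_lists_length_le) simp
  ultimately show ?thesis by (rule finite_subset)
qed

lemma mu_nonneg: "0 \<le> mu (A::'a::finite letter list set)"
  unfolding mu_def by (rule sum_nonneg) (simp add: weight_nonneg)

lemma mu_mono_trunc: "A \<subseteq> B \<Longrightarrow> mu (trunc (A::'a::finite letter list set) n) \<le> mu (trunc B n)"
  unfolding mu_def
  by (rule sum_mono2[OF finite_trunc]) (auto simp: trunc_def weight_nonneg)

lemma mu_mono_n: "m \<le> n \<Longrightarrow> mu (trunc (A::'a::finite letter list set) m) \<le> mu (trunc A n)"
  unfolding mu_def
  by (rule sum_mono2[OF finite_trunc]) (auto simp: trunc_def weight_nonneg)

lemma mu_Un_le: "finite A \<Longrightarrow> finite B \<Longrightarrow> mu (A \<union> B) \<le> mu A + mu (B::'a::finite letter list set)"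
  unfolding mu_def using sum.union_inter[of A B weight] sum_nonneg[of "A \<inter> B" weight] weight_nonneg
  by (metis (no_types, lifting) finite_Int le_add_same_cancel1 add.commute)

lemma mu_UN_le:
  assumes "finite I" "\<And>i. i \<in> I \<Longrightarrow> finite (F i)"
  shows "mu (\<Union>i\<in>I. F i) \<le> (\<Sum>i\<in>I. mu (F i :: 'a::finite letter list set))"
  using assms
proof (induction I rule: finite_induct)
  case empty then show ?case by (simp add: mu_def)
next
  case (insert i I)
  have "mu (\<Union>j\<in>insert i I. F j) = mu (F i \<union> (\<Union>j\<in>I. F j))" by simp
  also have "\<dots> \<le> mu (F i) + mu (\<Union>j\<in>I. F j)"
    using insert by (intro mu_Un_le) auto
  also have "\<dots> \<le> mu (F i) + (\<Sum>j\<in>I. mu (F j))" using insert by simp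
  finally show ?case using insert by simp
qed

definition RW :: "nat \<Rightarrow> 'a letter list set" where
  "RW m = {u. reduced u \<and> length u = m}"

lemma finite_RW: "finite (RW m :: 'a::finite letter list set)"
proof -
  have "RW m \<subseteq> {xs :: 'a letter list. set xs \<subseteq> UNIV \<and> length xs \<le> m}" by (auto simp: RW_def)
  moreover have "finite {xs :: 'a letter list. set xs \<subseteq> UNIV \<and> length xs \<le> m}"
    by (rule finite_lists_length_le) simp
  ultimately show ?thesis by (rule finite_subset)
qed

lemma reduced_snoc: "reduced (u @ [b]) \<longleftrightarrow> reduced u \<and> (u = [] \<or> b \<noteq> inv_letter (last u))"
  unfolding reduced_append by (auto simp: reduced_def)

lemma card_RW: "card (RW (Suc m) :: 'a::finite letter list set) = 2 * CARD('a) * (2 * CARD('a) - 1) ^ m"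
proof (induction m)
  case 0
  have "RW (Suc 0) = (\<lambda>a. [a]) ` (UNIV :: 'a letter set)"
  proof (intro set_eqI iffI)
    fix v :: "'a letter list" assume "v \<in> RW (Suc 0)"
    then obtain a where "v = [a]" unfolding RW_def by (auto simp: length_Suc_conv)
    then show "v \<in> (\<lambda>a. [a]) ` UNIV" by auto
  next
    fix v :: "'a letter list" assume "v \<in> (\<lambda>a. [a]) ` UNIV"
    then show "v \<in> RW (Suc 0)" by (auto simp: RW_def reduced_def)
  qed
  then have "card (RW (Suc 0) :: 'a letter list set) = card (UNIV :: 'a letter set)"
    by (simp add: card_image inj_on_def)
  then show ?case by (simp add: card_letters)
next
  case (Suc m)
  let ?S = "SIGMA u:(RW (Suc m) :: 'a letter list set). UNIV - {inv_letter (last u)}"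
  have eq: "RW (Suc (Suc m)) = (\<lambda>(u, b). u @ [b]) ` ?S"
  proof
    show "RW (Suc (Suc m)) \<subseteq> (\<lambda>(u, b). u @ [b]) ` ?S"
    proof
      fix v :: "'a letter list" assume v: "v \<in> RW (Suc (Suc m))"
      have "v \<noteq> []" using v by (auto simp: RW_def)
      define u where "u = butlast v"
      define b where "b = last v"
      have ub: "v = u @ [b]" using \<open>v \<noteq> []\<close> by (simp add: u_def b_def)
      then have "length u = Suc m" using v by (simp add: RW_def)
      moreover have "reduced u" "b \<noteq> inv_letter (last u)" using v ub \<open>length u = Suc m\<close>
        by (auto simp: RW_def reduced_snoc)
      ultimately show "v \<in> (\<lambda>(u, b). u @ [b]) ` ?S" using ub
        by (intro image_eqI[of _ _ "(u, b)"]) (auto simp: RW_def)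
    qed
  next
    show "(\<lambda>(u, b). u @ [b]) ` ?S \<subseteq> RW (Suc (Suc m))"
      by (auto simp: RW_def reduced_snoc)
  qed
  have inj: "inj_on (\<lambda>(u, b). u @ [b]) ?S" by (auto simp: inj_on_def)
  have "card (RW (Suc (Suc m)) :: 'a letter list set) = card ?S"
    unfolding eq by (rule card_image[OF inj])
  also have "\<dots> = (\<Sum>u\<in>RW (Suc m). card (UNIV - {inv_letter (last u)} :: 'a letter set))"
    by (rule card_SigmaI) (auto simp: finite_RW)
  also have "\<dots> = (\<Sum>u\<in>(RW (Suc m) :: 'a letter list set). 2 * CARD('a) - 1)"
    by (intro sum.cong refl) (simp add: card_Diff_singleton card_letters)
  also have "\<dots> = card (RW (Suc m) :: 'a letter list set) * (2 * CARD('a) - 1)" by simp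
  finally show ?case using Suc by simp
qed

lemma mu_const_len:
  assumes "finite A" "\<And>u. u \<in> A \<Longrightarrow> length u = Suc m"
  shows "mu (A :: 'a::finite letter list set) = real (card A) / ((base TYPE('a) + 1) * base TYPE('a) ^ m)"
proof -
  have "mu A = (\<Sum>u\<in>A. 1 / ((base TYPE('a) + 1) * base TYPE('a) ^ m))"
    unfolding mu_def
  proof (intro sum.cong refl)
    fix u assume "u \<in> A"
    then have l: "length u = Suc m" by (rule assms(2))
    then have "u \<noteq> []" by auto
    then show "weight u = 1 / ((base TYPE('a) + 1) * base TYPE('a) ^ m)"
      by (simp add: weight_form l)
  qed
  then show ?thesis by simp
qed

lemma mu_RW: "mu (RW (Suc m) :: 'a::finite letter list set) = 1"
proof -
  have C: "CARD('a) \<ge> 1" using finite_UNIV_card_ge_0[where 'a='a] by simp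
  have "mu (RW (Suc m) :: 'a letter list set) = real (card (RW (Suc m) :: 'a letter list set)) / ((base TYPE('a) + 1) * base TYPE('a) ^ m)"
    by (rule mu_const_len[OF finite_RW]) (simp add: RW_def)
  also have "real (card (RW (Suc m) :: 'a letter list set)) = (base TYPE('a) + 1) * base TYPE('a) ^ m"
    using C by (simp add: card_RW base_def of_nat_diff)
  finally show ?thesis using base_pos[where 'a='a] by simp
qed

lemma mu_level_step:
  assumes "A \<subseteq> Collect reduced"
  shows "mu (trunc (A::'a::finite letter list set) (Suc n)) \<le> mu (trunc A n) + 1"
proof -
  have eq: "trunc A (Suc n) = trunc A n \<union> {u\<in>A. length u = Suc n}"
    by (auto simp: trunc_def)
  have "mu (trunc A (Suc n)) = mu (trunc A n) + mu {u\<in>A. length u = Suc n}"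
    unfolding eq mu_def
  proof (rule sum.union_disjoint)
    show "finite (trunc A n)" by (rule finite_trunc)
    show "finite {u \<in> A. length u = Suc n}"
      by (rule finite_subset[OF _ finite_trunc[of A "Suc n"]]) (auto simp: trunc_def)
  qed (auto simp: trunc_def)
  moreover have "mu {u\<in>A. length u = Suc n} \<le> mu (RW (Suc n) :: 'a letter list set)"
    unfolding mu_def using assms
    by (intro sum_mono2[OF finite_RW]) (auto simp: RW_def weight_nonneg)
  ultimately show ?thesis by (simp add: mu_RW)
qed

lemma mu_shift:
  assumes "A \<subseteq> Collect reduced"
  shows "mu (trunc (A::'a::finite letter list set) n) \<le> mu (trunc A (n - L)) + real L"
proof (induction L)
  case 0 then show ?case by simp
next
  case (Suc L)
  show ?case
  proof (cases "n - L = 0")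
    case True
    then have "n - Suc L = n - L" by simp
    then show ?thesis using Suc by simp
  next
    case False
    then have e: "n - L = Suc (n - Suc L)" by simp
    have "mu (trunc A (n - L)) \<le> mu (trunc A (n - Suc L)) + 1"
      unfolding e by (rule mu_level_step[OF assms])
    then show ?thesis using Suc by simp
  qed
qed

lemma len_aux: "a \<noteq> [] \<Longrightarrow> length a \<le> n - k \<Longrightarrow> k + length a \<le> n"
  by (cases a) auto

lemma scale_lower:
  "mu (trunc (A::'a::finite letter list set) (n - length s)) / base TYPE('a) ^ length s
     \<le> mu (trunc ((\<lambda>a. s @ a) ` A) n)"
proof -
  let ?b = "base TYPE('a) ^ length s"
  let ?B = "trunc A (n - length s) - {[]}"
  have "mu (trunc A (n - length s)) = sum weight ?B"
    unfolding mu_def by (rule sum.mono_neutral_right) (auto simp: finite_trunc)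
  then have "mu (trunc A (n - length s)) / ?b = (\<Sum>a\<in>?B. weight (s @ a))"
    by (simp add: sum_divide_distrib weight_append)
  also have "\<dots> = sum weight ((\<lambda>a. s @ a) ` ?B)"
    by (rule sum.reindex_cong[symmetric]) (auto simp: inj_on_def)
  also have "\<dots> \<le> mu (trunc ((\<lambda>a. s @ a) ` A) n)"
    unfolding mu_def
    by (rule sum_mono2[OF finite_trunc]) (auto simp: trunc_def weight_nonneg len_aux)
  finally show ?thesis .
qed

lemma scale_upper:
  "mu (trunc ((\<lambda>a. s @ a) ` (A::'a::finite letter list set)) n)
     \<le> (mu (trunc A n) + 1) / base TYPE('a) ^ length s"
proof -
  let ?b = "base TYPE('a) ^ length s"
  let ?B = "trunc A n - {[]}"
  have bpos: "?b > 0" using base_pos[where 'a='a] by simp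
  have sub: "trunc ((\<lambda>a. s @ a) ` A) n \<subseteq> insert s ((\<lambda>a. s @ a) ` ?B)"
    by (auto simp: trunc_def)
  have "mu (trunc ((\<lambda>a. s @ a) ` A) n) \<le> sum weight (insert s ((\<lambda>a. s @ a) ` ?B))"
    unfolding mu_def by (rule sum_mono2) (use sub in \<open>auto simp: finite_trunc weight_nonneg\<close>)
  also have "\<dots> \<le> weight s + sum weight ((\<lambda>a. s @ a) ` ?B)"
    by (simp add: sum.insert_if finite_trunc weight_nonneg)
  also have "sum weight ((\<lambda>a. s @ a) ` ?B) = (\<Sum>a\<in>?B. weight (s @ a))"
    by (rule sum.reindex_cong) (auto simp: inj_on_def)
  also have "\<dots> = sum weight ?B / ?b"
    by (simp add: sum_divide_distrib weight_append)
  also have "sum weight ?B = mu (trunc A n)"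
    unfolding mu_def by (rule sum.mono_neutral_left) (auto simp: finite_trunc)
  finally have "mu (trunc ((\<lambda>a. s @ a) ` A) n) \<le> weight s + mu (trunc A n) / ?b" .
  moreover have "weight s \<le> 1 / ?b" by (rule weight_le)
  ultimately show ?thesis by (simp add: add_divide_distrib)
qed


lemma two_avoid:
  assumes "CARD('a::finite) \<ge> 2"
  shows "\<exists>g::'a letter. g \<noteq> a \<and> g \<noteq> b"
proof (rule ccontr)
  assume "\<not> ?thesis"
  then have "(UNIV :: 'a letter set) \<subseteq> {a, b}" by auto
  then have "card (UNIV :: 'a letter set) \<le> card {a, b}" by (intro card_mono) auto
  also have "\<dots> \<le> 2" by (simp add: card_insert_if)
  finally show False using assms by (simp add: card_letters)
qed

context
  fixes x y :: "'a::finite letter"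
  assumes xy: "x \<noteq> inv_letter y"
begin

lemma G_reduced: "semiG x y \<subseteq> Collect reduced"
  by (auto simp: semiG_def)

lemma cone_reduced: "v \<in> semiG x y \<Longrightarrow> cone x y v \<subseteq> Collect reduced"
  using cone_sub_G[OF xy] G_reduced by blast

lemma G_level:
  assumes C2: "CARD('a) \<ge> 2"
  shows "1 / base TYPE('a) ^ 4 \<le> mu {u \<in> semiG x y. length u = Suc m + 4}"
proof -
  define g where "g v = (SOME g. g \<noteq> inv_letter x \<and> g \<noteq> inv_letter (hd v))" for v :: "'a letter list"
  define h where "h v = (SOME h. h \<noteq> inv_letter y \<and> h \<noteq> inv_letter (last v))" for v :: "'a letter list"
  have g: "g v \<noteq> inv_letter x \<and> g v \<noteq> inv_letter (hd v)" for v
    unfolding g_def by (rule someI_ex) (rule two_avoid[OF C2])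
  have h: "h v \<noteq> inv_letter y \<and> h v \<noteq> inv_letter (last v)" for v
    unfolding h_def by (rule someI_ex) (rule two_avoid[OF C2])
  define phi where "phi v = x # g v # v @ [h v, y]" for v
  let ?R = "RW (Suc m) :: 'a letter list set"
  let ?T = "{u \<in> semiG x y. length u = Suc m + 4}"
  have finT: "finite ?T"
    by (rule finite_subset[OF _ finite_RW[of "Suc m + 4"]]) (auto simp: RW_def semiG_def)
  have into: "phi ` ?R \<subseteq> ?T"
  proof
    fix u assume "u \<in> phi ` ?R"
    then obtain v where v: "v \<in> ?R" "u = phi v" by auto
    have ne: "v \<noteq> []" using v by (auto simp: RW_def)
    have rv: "reduced v" using v by (simp add: RW_def)
    have "reduced (v @ [h v, y])"
      using rv ne h[of v] by (auto simp: reduced_append reduced_Cons inv_letter_eq_iff)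
    moreover have "hd (v @ [h v, y]) = hd v" using ne by simp
    ultimately have "reduced (g v # v @ [h v, y])"
      using g[of v] by (auto simp: reduced_Cons inv_letter_eq_iff)
    then have "reduced (phi v)" using g[of v] by (auto simp: phi_def reduced_Cons inv_letter_eq_iff)
    then show "u \<in> ?T" using v by (auto simp: phi_def semiG_def RW_def)
  qed
  have inj: "inj_on phi ?R"
  proof (rule inj_onI)
    fix v1 v2 assume v: "v1 \<in> ?R" "v2 \<in> ?R" "phi v1 = phi v2"
    then have l: "length v1 = length v2" by (simp add: RW_def)
    have "take (length v1) (drop 2 (phi v1)) = v1" by (simp add: phi_def)
    moreover have "take (length v2) (drop 2 (phi v2)) = v2" by (simp add: phi_def)
    ultimately show "v1 = v2" using v(3) l by metis
  qed
  have card: "card ?R \<le> card ?T"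
    using card_inj_on_le[OF inj into finT] .
  have b: "base TYPE('a) > 0" by (rule base_pos)
  have "1 = mu ?R" by (simp add: mu_RW)
  also have "\<dots> = real (card ?R) / ((base TYPE('a) + 1) * base TYPE('a) ^ m)"
    by (rule mu_const_len[OF finite_RW]) (simp add: RW_def)
  finally have eq1: "real (card ?R) = (base TYPE('a) + 1) * base TYPE('a) ^ m"
    using b by (simp add: field_simps)
  have "mu ?T = real (card ?T) / ((base TYPE('a) + 1) * base TYPE('a) ^ (m + 4))"
    by (rule mu_const_len[OF finT]) simp
  also have "\<dots> \<ge> real (card ?R) / ((base TYPE('a) + 1) * base TYPE('a) ^ (m + 4))"
    using card b by (intro divide_right_mono) auto
  finally have "mu ?T \<ge> real (card ?R) / ((base TYPE('a) + 1) * base TYPE('a) ^ (m + 4))" .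
  moreover have "real (card ?R) / ((base TYPE('a) + 1) * base TYPE('a) ^ (m + 4)) = 1 / base TYPE('a) ^ 4"
  proof -
    have p1: "base TYPE('a) + 1 > 0" "base TYPE('a) ^ m > 0" "base TYPE('a) ^ 4 > 0" using b by auto
    have e: "(base TYPE('a) + 1) * base TYPE('a) ^ (m + 4) = ((base TYPE('a) + 1) * base TYPE('a) ^ m) * base TYPE('a) ^ 4"
      by (simp add: power_add)
    have nz: "(base TYPE('a) + 1) * base TYPE('a) ^ m \<noteq> 0" using p1 by simp
    show ?thesis unfolding eq1 e using nz by simp
  qed
  ultimately show ?thesis by simp
qed

lemma M_lower:
  assumes C2: "CARD('a) \<ge> 2"
  shows "real m / base TYPE('a) ^ 4 \<le> mu (trunc (semiG x y) (m + 5))"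
proof (induction m)
  case 0 then show ?case by (simp add: mu_nonneg)
next
  case (Suc m)
  have eq: "trunc (semiG x y) (Suc m + 5) = trunc (semiG x y) (m + 5) \<union> {u \<in> semiG x y. length u = Suc (Suc m) + 4}"
    by (auto simp: trunc_def)
  have "mu (trunc (semiG x y) (Suc m + 5)) = mu (trunc (semiG x y) (m + 5)) + mu {u \<in> semiG x y. length u = Suc (Suc m) + 4}"
    unfolding eq mu_def
  proof (rule sum.union_disjoint)
    show "finite (trunc (semiG x y) (m + 5))" by (rule finite_trunc)
    show "finite {u \<in> semiG x y. length u = Suc (Suc m) + 4}"
      by (rule finite_subset[OF _ finite_trunc[of "semiG x y" "Suc m + 5"]]) (auto simp: trunc_def)
  qed (auto simp: trunc_def)
  moreover have "real (Suc m) / base TYPE('a) ^ 4 = real m / base TYPE('a) ^ 4 + 1 / base TYPE('a) ^ 4"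
    by (simp add: add_divide_distrib)
  ultimately show ?case using Suc G_level[OF C2, of "Suc m"] by simp
qed

lemma Mw_tendsto:
  assumes C2: "CARD('a) \<ge> 2" and v: "v \<in> semiG x y"
  shows "filterlim (\<lambda>n. mu (trunc (cone x y v) n)) at_top sequentially"
  unfolding filterlim_at_top
proof
  fix Z :: real
  let ?b = "base TYPE('a)"
  have b: "?b \<ge> 1" by (rule base_ge1)
  define K where "K = ?b ^ 4 * ?b ^ length v"
  have K: "K > 0" using b by (simp add: K_def)
  define N0 where "N0 = length v + 5 + nat \<lceil>Z * K\<rceil>"
  show "eventually (\<lambda>n. Z \<le> mu (trunc (cone x y v) n)) sequentially"
    unfolding eventually_sequentially
  proof (intro exI allI impI)
    fix n assume n: "N0 \<le> n"
    define m where "m = n - length v - 5"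
    have nm: "n - length v = m + 5" using n by (simp add: m_def N0_def)
    have "Z * K \<le> real m" using n unfolding m_def N0_def by linarith
    then have "Z \<le> real m / K" using K by (simp add: field_simps)
    also have "\<dots> = (real m / ?b ^ 4) / ?b ^ length v" by (simp add: K_def)
    also have "\<dots> \<le> mu (trunc (semiG x y) (n - length v)) / ?b ^ length v"
      unfolding nm using b by (intro divide_right_mono M_lower[OF C2]) auto
    also have "\<dots> \<le> mu (trunc (cone x y v) n)"
      unfolding cone_def by (rule scale_lower)
    finally show "Z \<le> mu (trunc (cone x y v) n)" .
  qed
qed

end

lemma slow_var:
  fixes M a :: "nat \<Rightarrow> real"
  assumes M: "filterlim M at_top sequentially"
    and Mmono: "\<And>n. M (n - L) \<le> M n" and Mshift: "\<And>n. M n \<le> M (n - L) + real L"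
    and a0: "\<And>n. 0 \<le> a n" and aM: "\<And>n. a n \<le> M n"
    and amono: "\<And>n. a (n - L) \<le> a n" and ashift: "\<And>n. a n \<le> a (n - L) + real L"
  shows "(\<lambda>n. a n / M n - a (n - L) / M (n - L)) \<longlonglongrightarrow> 0"
proof (rule Lim_null_comparison)
  have ev: "eventually (\<lambda>n. real L + 1 \<le> M n) sequentially"
    using M unfolding filterlim_at_top by blast
  show "eventually (\<lambda>n. norm (a n / M n - a (n - L) / M (n - L)) \<le> real L * inverse (M n)) sequentially"
    using ev
  proof (rule eventually_mono)
    fix n assume n: "real L + 1 \<le> M n"
    define Mn where "Mn = M n"
    define M' where "M' = M (n - L)"
    define an where "an = a n"
    define a' where "a' = a (n - L)"
    have M'pos: "M' > 0" using Mshift[of n] n by (simp add: M'_def)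
    have Mpos: "Mn > 0" using n by (simp add: Mn_def)
    define q where "q = a' / M'"
    have q0: "0 \<le> q" using a0 M'pos by (simp add: q_def a'_def)
    have q1: "q \<le> 1" using aM[of "n - L"] M'pos by (simp add: q_def a'_def M'_def)
    have a'eq: "a' = q * M'" using M'pos by (simp add: q_def)
    have up: "an \<le> q * Mn + real L"
    proof -
      have "an \<le> a' + L" using ashift[of n] by (simp add: an_def a'_def)
      also have "\<dots> = q * M' + L" by (simp add: a'eq)
      also have "q * M' \<le> q * Mn" using q0 Mmono[of n] by (intro mult_left_mono) (auto simp: M'_def Mn_def)
      finally show ?thesis by simp
    qed
    have lo: "q * Mn - real L \<le> an"
    proof -
      have "q * Mn \<le> q * (M' + L)" using q0 Mshift[of n] by (intro mult_left_mono) (auto simp: M'_def Mn_def)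
      also have "\<dots> \<le> q * M' + L" using q1 q0 mult_left_le_one_le[of "real L" q] by (simp add: algebra_simps)
      also have "q * M' = a'" by (simp add: a'eq)
      also have "a' \<le> an" using amono[of n] by (simp add: a'_def an_def)
      finally show ?thesis by simp
    qed
    have "an / Mn \<le> (q * Mn + real L) / Mn" using up Mpos by (intro divide_right_mono) auto
    also have "\<dots> = q + real L / Mn" using Mpos by (simp add: add_divide_distrib)
    finally have "an / Mn - q \<le> real L / Mn" by simp
    moreover have "- (real L / Mn) \<le> an / Mn - q" using lo Mpos by (simp add: field_simps)
    ultimately have "\<bar>an / Mn - q\<bar> \<le> real L / Mn" by linarith
    then show "norm (a n / M n - a (n - L) / M (n - L)) \<le> real L * inverse (M n)"
      by (simp add: an_def Mn_def q_def a'_def M'_def divide_inverse)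
  qed
  show "(\<lambda>n. real L * inverse (M n)) \<longlonglongrightarrow> 0"
    using tendsto_mult[OF tendsto_const[of "real L"] tendsto_inverse_0_at_top[OF M]] by simp
qed

lemma ratio_to_1:
  fixes M :: "nat \<Rightarrow> real"
  assumes M: "filterlim M at_top sequentially"
    and Mmono: "\<And>n. M (n - L) \<le> M n" and Mshift: "\<And>n. M n \<le> M (n - L) + real L"
  shows "(\<lambda>n. M (n - L) / M n) \<longlonglongrightarrow> 1"
proof -
  have "(\<lambda>n. M n / M n - M (n - L) / M n) \<longlonglongrightarrow> 0"
  proof (rule Lim_null_comparison)
    have ev: "eventually (\<lambda>n. 1 \<le> M n) sequentially"
      using M unfolding filterlim_at_top by blast
    show "eventually (\<lambda>n. norm (M n / M n - M (n - L) / M n) \<le> real L * inverse (M n)) sequentially"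
      using ev
    proof (rule eventually_mono)
      fix n assume n: "1 \<le> M n"
      have "norm (M n / M n - M (n - L) / M n) = (M n - M (n - L)) / M n"
        using n Mmono[of n] by (simp add: field_simps)
      also have "\<dots> \<le> real L / M n" using n Mshift[of n] by (intro divide_right_mono) auto
      finally show "norm (M n / M n - M (n - L) / M n) \<le> real L * inverse (M n)" by (simp add: divide_inverse)
    qed
    show "(\<lambda>n. real L * inverse (M n)) \<longlonglongrightarrow> 0"
      using tendsto_mult[OF tendsto_const[of "real L"] tendsto_inverse_0_at_top[OF M]] by simp
  qed
  moreover have "eventually (\<lambda>n. M n / M n = 1) sequentially"
    using M unfolding filterlim_at_top
    by (metis (mono_tags, lifting) eventually_mono divide_self_if order.strict_trans2 zero_less_one less_irrefl)
  ultimately have "(\<lambda>n. 1 - M (n - L) / M n) \<longlonglongrightarrow> 0"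
    by (elim Lim_transform_eventually) (auto elim: eventually_mono)
  then have "(\<lambda>n. 1 - (1 - M (n - L) / M n)) \<longlonglongrightarrow> 1 - 0"
    by (intro tendsto_diff tendsto_const)
  then show ?thesis by simp
qed


lemma ratio_bounds:
  assumes "A \<subseteq> B"
  shows "0 \<le> mu (trunc (A::'a::finite letter list set) n) / mu (trunc B n)"
    "mu (trunc A n) / mu (trunc B n) \<le> 1"
proof -
  have a0: "0 \<le> mu (trunc A n)" by (rule mu_nonneg)
  have ab: "mu (trunc A n) \<le> mu (trunc B n)" by (rule mu_mono_trunc[OF assms])
  show "0 \<le> mu (trunc A n) / mu (trunc B n)" using a0 ab by simp
  show "mu (trunc A n) / mu (trunc B n) \<le> 1"
    using a0 ab by (cases "mu (trunc B n) = 0") (auto simp: divide_le_eq_1)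
qed

lemma ud_limsup:
  assumes "A \<subseteq> B"
  shows "limsup (\<lambda>n. ereal (mu (trunc (A::'a::finite letter list set) n) / mu (trunc B n))) = ereal (upper_density B A)"
    and "0 \<le> upper_density B A" and "upper_density B A \<le> 1"
proof -
  let ?f = "\<lambda>n. ereal (mu (trunc A n) / mu (trunc B n))"
  have le1: "limsup ?f \<le> 1"
    by (rule Limsup_bounded) (use ratio_bounds[OF assms] in auto)
  have ge0: "0 \<le> limsup ?f"
    by (rule le_Limsup) (use ratio_bounds[OF assms] in auto)
  have fin: "\<bar>limsup ?f\<bar> \<noteq> \<infinity>" using le1 ge0 by auto
  show "limsup ?f = ereal (upper_density B A)"
    unfolding upper_density_def using fin by (simp add: ereal_real)
  then show "0 \<le> upper_density B A" "upper_density B A \<le> 1" using le1 ge0 by auto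
qed

lemma ud_subseq:
  assumes "A \<subseteq> B"
  shows "\<exists>r. strict_mono r \<and> (\<lambda>i. mu (trunc (A::'a::finite letter list set) (r i)) / mu (trunc B (r i))) \<longlonglongrightarrow> upper_density B A"
proof -
  let ?f = "\<lambda>n. ereal (mu (trunc A n) / mu (trunc B n))"
  obtain r where r: "strict_mono r" "(?f o r) \<longlonglongrightarrow> limsup ?f" using limsup_subseq_lim by blast
  then have "(\<lambda>i. ereal (mu (trunc A (r i)) / mu (trunc B (r i)))) \<longlonglongrightarrow> ereal (upper_density B A)"
    using ud_limsup(1)[OF assms] by (simp add: o_def)
  then show ?thesis using r(1) by auto
qed

lemma ud_ev:
  assumes "A \<subseteq> B" "upper_density B A \<le> c" "0 < \<delta>"
  shows "eventually (\<lambda>n. mu (trunc (A::'a::finite letter list set) n) \<le> (c + \<delta>) * mu (trunc B n)) sequentially"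
proof -
  let ?f = "\<lambda>n. ereal (mu (trunc A n) / mu (trunc B n))"
  have "limsup ?f < ereal (c + \<delta>)" using ud_limsup(1)[OF assms(1)] assms(2,3) by simp
  then have "eventually (\<lambda>n. ?f n < ereal (c + \<delta>)) sequentially" by (rule Limsup_lessD)
  then show ?thesis
  proof (rule eventually_mono)
    fix n assume "?f n < ereal (c + \<delta>)"
    then have lt: "mu (trunc A n) / mu (trunc B n) < c + \<delta>" by simp
    have ab: "mu (trunc A n) \<le> mu (trunc B n)" by (rule mu_mono_trunc[OF assms(1)])
    have a0: "0 \<le> mu (trunc A n)" by (rule mu_nonneg)
    show "mu (trunc A n) \<le> (c + \<delta>) * mu (trunc B n)"
    proof (cases "mu (trunc B n) = 0")
      case True then show ?thesis using ab a0 by simp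
    next
      case False
      then have "mu (trunc B n) > 0" using mu_nonneg[of "trunc B n"] by simp
      then show ?thesis using lt by (simp add: divide_less_eq)
    qed
  qed
qed

lemma geo_shift: "(\<Sum>i<Suc n. (L::real) ^ i) = 1 + L * (\<Sum>i<n. L ^ i)"
  unfolding sum.lessThan_Suc_shift by (simp add: sum_distrib_left)

primrec Bnd :: "(nat \<Rightarrow> real) \<Rightarrow> (nat \<Rightarrow> real) \<Rightarrow> 'b set \<Rightarrow> ('b \<Rightarrow> nat) \<Rightarrow> real \<Rightarrow> nat \<Rightarrow> nat \<Rightarrow> real" where
  "Bnd rS M F len b 0 n = rS n"
| "Bnd rS M F len b (Suc j) n = rS n + (\<Sum>s\<in>F. (1 / b ^ len s) * (M (n - len s) / M n) * Bnd rS M F len b j (n - len s))"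

lemma Bnd_lim:
  assumes rS: "\<And>L. (\<lambda>i. rS (r i - L)) \<longlonglongrightarrow> d"
    and M: "\<And>L a. (\<lambda>i. M (r i - L - a) / M (r i - L)) \<longlonglongrightarrow> 1"
  shows "(\<lambda>i. Bnd rS M F len b j (r i - L)) \<longlonglongrightarrow> d * (\<Sum>i<Suc j. (\<Sum>s\<in>F. 1 / b ^ len s) ^ i)"
proof (induction j arbitrary: L)
  case 0 then show ?case using rS by simp
next
  case (Suc j)
  let ?Lam = "\<Sum>s\<in>F. 1 / b ^ len s"
  let ?c = "d * (\<Sum>i<Suc j. ?Lam ^ i)"
  have "(\<lambda>i. rS (r i - L) + (\<Sum>s\<in>F. (1 / b ^ len s) * (M (r i - L - len s) / M (r i - L)) * Bnd rS M F len b j (r i - L - len s)))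
      \<longlonglongrightarrow> d + (\<Sum>s\<in>F. (1 / b ^ len s) * 1 * ?c)"
  proof (intro tendsto_add tendsto_sum tendsto_mult tendsto_const rS M)
    fix s
    show "(\<lambda>i. Bnd rS M F len b j (r i - L - len s)) \<longlonglongrightarrow> ?c"
      using Suc.IH[of "L + len s"] by (simp add: diff_diff_left)
  qed
  moreover have "d + (\<Sum>s\<in>F. (1 / b ^ len s) * 1 * ?c) = d * (\<Sum>i<Suc (Suc j). ?Lam ^ i)"
  proof -
    have A: "(\<Sum>s\<in>F. (1 / b ^ len s) * 1 * ?c) = ?Lam * ?c" by (simp add: sum_distrib_right)
    have B: "(\<Sum>i<Suc (Suc j). ?Lam ^ i) = 1 + ?Lam * (\<Sum>i<Suc j. ?Lam ^ i)"
      by (rule geo_shift)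
    have gen: "\<And>L S. d + L * (d * S) = d * (1 + L * S)" by (simp add: algebra_simps)
    show ?thesis unfolding A B by (rule gen)
  qed
  ultimately show ?case by simp
qed


locale setting =
  fixes x y :: "'a::finite letter" and w :: "'a letter list" and S :: "'a letter list set"
    and \<epsilon> :: real and k :: nat
  assumes C2: "CARD('a) \<ge> 2" and xy: "x \<noteq> inv_letter y" and wG: "w \<in> semiG x y"
    and eps: "\<epsilon> > 0" and k2: "k \<ge> 2" and Ssub: "S \<subseteq> cone x y w"
    and spf: "strongly_product_free k S"
    and reg: "\<And>s. s \<in> S \<Longrightarrow> upper_density (cone x y (s @ w)) (S \<inter> cone x y (s @ w))
                  \<le> upper_density (cone x y w) S + \<epsilon>"
begin

abbreviation "G \<equiv> semiG x y"
abbreviation "Cw \<equiv> cone x y w"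
abbreviation "Mw n \<equiv> mu (trunc Cw n)"
abbreviation "Cs s \<equiv> cone x y (s @ w)"
abbreviation "bb \<equiv> base TYPE('a)"

definition "U = (\<Union>s\<in>S. Cs s)"
definition "Fm = {s\<in>S. \<forall>s'\<in>S. s @ w \<in> Cs s' \<longrightarrow> s' = s}"
definition "Q = S - U"

lemma Cw_G: "Cw \<subseteq> G" using cone_sub_G[OF xy wG] .

lemma Cw_red: "Cw \<subseteq> Collect reduced" using Cw_G G_reduced[OF xy] by blast

lemma S_G: "S \<subseteq> G" using Ssub Cw_G by blast

lemma Cw_mult: "a \<in> Cw \<Longrightarrow> t \<in> Cw \<Longrightarrow> a @ t \<in> Cw"
proof -
  assume a: "a \<in> Cw" and t: "t \<in> Cw"
  obtain al where al: "al \<in> G" "a = w @ al" using a unfolding cone_def by auto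
  obtain be where be: "be \<in> G" "t = w @ be" using t unfolding cone_def by auto
  have "al @ w @ be \<in> G" using al be wG G_append[OF xy] by auto
  then show "a @ t \<in> Cw" unfolding cone_def using al be by (intro image_eqI[of _ _ "al @ w @ be"]) auto
qed

lemma fmult_Cw: "a \<in> Cw \<Longrightarrow> t \<in> Cw \<Longrightarrow> fmult a t = a @ t"
  using fmult_G[OF xy] Cw_G by blast

lemma Nil_notin: "[] \<notin> S"
proof
  assume "[] \<in> S"
  have "fprod [[], []] = ([] :: 'a letter list)"
    by (simp add: fprod_def fmult_def reduce_def)
  have "\<not> (\<exists>xs z. length xs = 2 \<and> set xs \<subseteq> S \<and> z \<in> S \<and> fprod xs = z)"
    using spf k2 unfolding strongly_product_free_def by blast
  moreover have "length [[], []] = (2::nat)" "set [[], []] \<subseteq> S" using \<open>[] \<in> S\<close> by auto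
  ultimately show False using \<open>fprod [[], []] = []\<close> \<open>[] \<in> S\<close> by blast
qed

lemma S_ne: "s \<in> S \<Longrightarrow> s \<noteq> []" using Nil_notin by auto

lemma sw_Cw: "s \<in> S \<Longrightarrow> s @ w \<in> Cw"
  using Cw_mult[of s w] Ssub cone_self[of w x y] by auto

lemma sw_G: "s \<in> S \<Longrightarrow> s @ w \<in> G" using sw_Cw Cw_G by auto

lemma Cs_eq: "Cs s = (\<lambda>a. s @ a) ` Cw"
  using cone_append[OF xy wG, of s] by simp

lemma Cs_sub: "s \<in> S \<Longrightarrow> Cs s \<subseteq> Cw"
  using cone_trans[OF xy sw_Cw] by blast

lemma Mw_tend: "filterlim (\<lambda>n. Mw n) at_top sequentially"
  by (rule Mw_tendsto[OF xy C2 wG])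

lemma Mw_mono: "m \<le> n \<Longrightarrow> Mw m \<le> Mw n" by (rule mu_mono_n)

lemma Mw_shift: "Mw n \<le> Mw (n - L) + real L" by (rule mu_shift[OF Cw_red])

lemma Mw_nonneg: "0 \<le> Mw n" by (rule mu_nonneg)

lemma U1: "s \<in> S \<Longrightarrow> \<exists>s'\<in>Fm. Cs s \<subseteq> Cs s'"
proof -
  assume s: "s \<in> S"
  let ?P = "\<lambda>s'. s' \<in> S \<and> s @ w \<in> Cs s'"
  have "?P s" using s cone_self by blast
  then obtain s' where s': "?P s'" and min: "\<And>t. ?P t \<Longrightarrow> length s' \<le> length t"
    using ex_has_least_nat[of ?P s length] by blast
  have sub: "Cs s \<subseteq> Cs s'" using cone_trans[OF xy] s' by blast
  have "s' \<in> Fm"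
    unfolding Fm_def
  proof (intro CollectI conjI ballI impI)
    show "s' \<in> S" using s' by simp
    fix t assume t: "t \<in> S" "s' @ w \<in> Cs t"
    have "Cs s' \<subseteq> Cs t" using cone_trans[OF xy] t(2) by blast
    then have "?P t" using t(1) s' by blast
    then have l1: "length s' \<le> length t" by (rule min)
    have l2: "length (t @ w) \<le> length (s' @ w)" using cone_len[OF t(2)] .
    have "take (length (t @ w)) (s' @ w) = t @ w" by (rule cone_take[OF t(2)])
    then have "s' @ w = t @ w" using l1 l2 by simp
    then show "t = s'" by simp
  qed
  then show ?thesis using sub by blast
qed

lemma U2: "s1 \<in> Fm \<Longrightarrow> s2 \<in> Fm \<Longrightarrow> s1 \<noteq> s2 \<Longrightarrow> Cs s1 \<inter> Cs s2 = {}"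
proof (rule ccontr)
  assume s: "s1 \<in> Fm" "s2 \<in> Fm" "s1 \<noteq> s2" and ne: "Cs s1 \<inter> Cs s2 \<noteq> {}"
  then obtain z where z: "z \<in> Cs s1" "z \<in> Cs s2" by blast
  have S: "s1 \<in> S" "s2 \<in> S" using s by (auto simp: Fm_def)
  show False
  proof (cases "length (s1 @ w) \<le> length (s2 @ w)")
    case True
    have "s2 @ w \<in> Cs s1"
      by (rule laminar[OF xy sw_G[OF S(1)] sw_G[OF S(2)] _ z True]) (use S_ne[OF S(2)] in simp)
    then show False using s S unfolding Fm_def by auto
  next
    case False
    have "s1 @ w \<in> Cs s2"
      by (rule laminar[OF xy sw_G[OF S(2)] sw_G[OF S(1)] _ z(2) z(1)]) (use S_ne[OF S(1)] False in auto)
    then show False using s S unfolding Fm_def by auto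
  qed
qed

lemma take_cone: "z \<in> Cs q \<Longrightarrow> take (length q) z = q"
proof -
  assume "z \<in> Cs q"
  then have "take (length (q @ w)) z = q @ w" by (rule cone_take)
  then have "take (length q) (take (length (q @ w)) z) = q" by simp
  then show ?thesis by (simp add: min_def)
qed

lemma Q_window:
  assumes q: "q1 \<in> Q" "q2 \<in> Q" and z: "z \<in> Cs q1" "z \<in> Cs q2" and le: "length q1 \<le> length q2"
  shows "length q2 < length q1 + length w"
proof (rule ccontr)
  assume "\<not> ?thesis"
  then have ge: "length q1 + length w \<le> length q2" by simp
  have S: "q1 \<in> S" "q2 \<in> S" using q by (auto simp: Q_def)
  have "q2 @ w \<in> Cs q1"
    by (rule laminar[OF xy sw_G[OF S(1)] sw_G[OF S(2)] _ z]) (use S_ne[OF S(2)] le in auto)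
  then obtain be where be: "be \<in> G" "q2 @ w = q1 @ w @ be" unfolding cone_def by auto
  define be' where "be' = take (length q2 - length (q1 @ w)) be"
  have q2eq: "q2 = q1 @ w @ be'"
  proof -
    have "q2 = take (length q2) (q2 @ w)" by simp
    also have "\<dots> = take (length q2) (q1 @ w @ be)" using be by simp
    also have "\<dots> = q1 @ w @ be'" using ge by (simp add: be'_def)
    finally show ?thesis .
  qed
  have "be' \<in> G"
  proof (cases "be' = []")
    case True then show ?thesis by simp
  next
    case False
    then have bne: "be \<noteq> []" by (auto simp: be'_def)
    have beq: "be = be' @ drop (length q2 - length (q1 @ w)) be" by (simp add: be'_def)
    have "reduced be" using be(1) by (simp add: semiG_def)
    then have "reduced (be' @ drop (length q2 - length (q1 @ w)) be)" using beq by simp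
    then have "reduced be'" by (simp add: reduced_append)
    moreover have "hd be' = x"
    proof -
      have "hd be = hd be'" using beq False by (metis hd_append2)
      moreover have "hd be = x" using bne be(1) by (simp add: semiG_def)
      ultimately show ?thesis by simp
    qed
    moreover have "last be' = y"
    proof -
      have "last q2 = last be'" using q2eq False by simp
      moreover have "last q2 = y" using S_G S(2) S_ne[OF S(2)] by (auto simp: semiG_def)
      ultimately show ?thesis by simp
    qed
    ultimately show ?thesis by (simp add: semiG_def)
  qed
  then have "q2 \<in> Cs q1" using q2eq unfolding cone_def by auto
  then have "q2 \<in> U" using S(1) by (auto simp: U_def)
  then show False using q(2) by (simp add: Q_def)
qed

lemma card_K:
  assumes P: "P \<subseteq> Q"
  shows "finite {q\<in>P. z \<in> Cs q} \<and> card {q\<in>P. z \<in> Cs q} \<le> length w"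
proof -
  let ?K = "{q\<in>P. z \<in> Cs q}"
  have fin: "finite ?K"
  proof (rule finite_subset)
    show "?K \<subseteq> (\<lambda>i. take i z) ` {..length z}"
    proof
      fix q assume q: "q \<in> ?K"
      then have zq: "z \<in> Cs q" unfolding mem_Collect_eq by (rule conjunct2)
      then have "take (length q) z = q" by (rule take_cone)
      moreover have "length q \<le> length z" using cone_len[OF zq] by simp
      ultimately show "q \<in> (\<lambda>i. take i z) ` {..length z}" by (intro image_eqI[of _ _ "length q"]) auto
    qed
  qed simp
  have inj: "inj_on length ?K"
  proof (rule inj_onI)
    fix q1 q2 assume h: "q1 \<in> ?K" "q2 \<in> ?K" "length q1 = length q2"
    have z1: "z \<in> Cs q1" using h(1) unfolding mem_Collect_eq by (rule conjunct2)
    have z2: "z \<in> Cs q2" using h(2) unfolding mem_Collect_eq by (rule conjunct2)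
    have t1: "take (length q1) z = q1" using z1 by (rule take_cone)
    have t2: "take (length q2) z = q2" using z2 by (rule take_cone)
    show "q1 = q2" using t1 t2 h(3) by metis
  qed
  show ?thesis
  proof (cases "?K = {}")
    case True then show ?thesis by (simp only: card.empty finite.emptyI) simp
  next
    case False
    define m where "m = Min (length ` ?K)"
    have finL: "finite (length ` ?K)" using fin by (rule finite_imageI)
    have neL: "length ` ?K \<noteq> {}" using False by (simp only: image_is_empty not_False_eq_True)
    have "m \<in> length ` ?K" unfolding m_def using finL neL by (rule Min_in)
    then obtain q1 where q1: "q1 \<in> ?K" "m = length q1" by (rule imageE) (rule that, assumption, simp)
    have sub: "length ` ?K \<subseteq> {m..<m + length w}"
    proof
      fix l assume l: "l \<in> length ` ?K"
      then obtain q2 where q2: "q2 \<in> ?K" "l = length q2" by (rule imageE) (rule that, assumption, simp)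
      have "m \<le> l" unfolding m_def using finL l by (rule Min_le)
      moreover have "l < m + length w"
      proof -
        have a: "q1 \<in> P \<and> z \<in> Cs q1" using q1(1) unfolding mem_Collect_eq .
        have b: "q2 \<in> P \<and> z \<in> Cs q2" using q2(1) unfolding mem_Collect_eq .
        have "q1 \<in> Q" "q2 \<in> Q" using a b P by (meson subsetD)+
        moreover have "z \<in> Cs q1" using a by (rule conjunct2)
        moreover have "z \<in> Cs q2" using b by (rule conjunct2)
        moreover have "length q1 \<le> length q2" using q1(2) q2(2) \<open>m \<le> l\<close> by simp
        ultimately have "length q2 < length q1 + length w" by (rule Q_window)
        then show ?thesis using q1(2) q2(2) by simp
      qed
      ultimately show "l \<in> {m..<m + length w}" by simp
    qed
    have "card ?K = card (length ` ?K)" using card_image[OF inj] by (rule sym)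
    also have "\<dots> \<le> card {m..<m + length w}" by (rule card_mono) (simp, rule sub)
    finally show ?thesis using fin by simp
  qed
qed
end


context setting
begin

lemma Q_sub_S: "Q \<subseteq> S" by (auto simp: Q_def)

lemma Q_red: "Q \<subseteq> Collect reduced" using Q_sub_S Ssub Cw_red by blast

lemma trunc_Cs: "q \<in> S \<Longrightarrow> trunc (Cs q) n = {z \<in> trunc Cw n. z \<in> Cs q}"
  using Cs_sub[of q] unfolding trunc_def by blast

lemma double_count:
  assumes fin: "finite P" and P: "P \<subseteq> Q"
  shows "(\<Sum>q\<in>P. mu (trunc (Cs q) n)) \<le> real (length w) * Mw n"
proof -
  have PS: "P \<subseteq> S" using P Q_sub_S by blast
  have "(\<Sum>q\<in>P. mu (trunc (Cs q) n)) = (\<Sum>q\<in>P. \<Sum>z\<in>trunc Cw n. if z \<in> Cs q then weight z else 0)"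
  proof (rule sum.cong[OF refl])
    fix q assume "q \<in> P"
    then have qS: "q \<in> S" using PS by blast
    show "mu (trunc (Cs q) n) = (\<Sum>z\<in>trunc Cw n. if z \<in> Cs q then weight z else 0)"
      unfolding mu_def trunc_Cs[OF qS] by (rule sum.inter_filter[OF finite_trunc])
  qed
  also have "\<dots> = (\<Sum>z\<in>trunc Cw n. \<Sum>q\<in>P. if z \<in> Cs q then weight z else 0)"
    by (rule sum.swap)
  also have "\<dots> \<le> (\<Sum>z\<in>trunc Cw n. weight z * real (length w))"
  proof (rule sum_mono)
    fix z assume "z \<in> trunc Cw n"
    have "(\<Sum>q\<in>P. if z \<in> Cs q then weight z else 0) = (\<Sum>q\<in>{q\<in>P. z \<in> Cs q}. weight z)"
      by (rule sum.inter_filter[OF fin, symmetric])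
    also have "\<dots> = real (card {q\<in>P. z \<in> Cs q}) * weight z" by (rule sum_constant)
    also have "\<dots> \<le> real (length w) * weight z"
      using card_K[OF P, of z] weight_nonneg[of z] by (intro mult_right_mono) auto
    finally show "(\<Sum>q\<in>P. if z \<in> Cs q then weight z else 0) \<le> weight z * real (length w)"
      by (simp add: mult.commute)
  qed
  also have "\<dots> = real (length w) * Mw n"
    unfolding mu_def sum_distrib_right[symmetric] by (rule mult.commute)
  finally show ?thesis .
qed

lemma Q_bound: "Mw m * mu (trunc Q p) \<le> real (length w) * Mw (p + m)"
proof -
  let ?P = "trunc Q p"
  have PQ: "?P \<subseteq> Q" by (auto simp: trunc_def)
  have "Mw m * mu ?P = (\<Sum>q\<in>?P. Mw m * weight q)"
    unfolding mu_def by (simp add: sum_distrib_left)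
  also have "\<dots> \<le> (\<Sum>q\<in>?P. mu (trunc (Cs q) (p + m)))"
  proof (rule sum_mono)
    fix q assume q: "q \<in> ?P"
    then have lq: "length q \<le> p" by (simp add: trunc_def)
    have bpos: "base TYPE('a) ^ length q > 0" using base_pos[where 'a='a] by simp
    have "Mw m * weight q \<le> Mw m * (1 / base TYPE('a) ^ length q)"
      by (intro mult_left_mono weight_le Mw_nonneg)
    also have "\<dots> = Mw m / base TYPE('a) ^ length q" by simp
    also have "\<dots> \<le> Mw (p + m - length q) / base TYPE('a) ^ length q"
      using lq bpos by (intro divide_right_mono Mw_mono) auto
    also have "\<dots> \<le> mu (trunc ((\<lambda>a. q @ a) ` Cw) (p + m))" by (rule scale_lower)
    also have "(\<lambda>a. q @ a) ` Cw = Cs q" by (rule Cs_eq[symmetric])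
    finally show "Mw m * weight q \<le> mu (trunc (Cs q) (p + m))" .
  qed
  also have "\<dots> \<le> real (length w) * Mw (p + m)"
    by (rule double_count[OF finite_trunc PQ])
  finally show ?thesis .
qed

lemma Q_small:
  assumes d: "\<delta> > 0"
  shows "eventually (\<lambda>n. mu (trunc Q n) \<le> \<delta> * Mw n) sequentially"
proof -
  have "eventually (\<lambda>m. 2 * real (length w) / \<delta> + 1 \<le> Mw m) sequentially"
    using Mw_tend unfolding filterlim_at_top by blast
  then obtain m where m: "2 * real (length w) / \<delta> + 1 \<le> Mw m"
    unfolding eventually_sequentially by blast
  have Mpos: "Mw m > 0" using m d by (smt (verit) divide_nonneg_pos of_nat_0_le_iff)
  have wm: "real (length w) / Mw m \<le> \<delta> / 2"
  proof -
    have "2 * real (length w) / \<delta> \<le> Mw m" using m by simp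
    then have "2 * real (length w) \<le> \<delta> * Mw m" using d by (simp add: field_simps)
    then show ?thesis using Mpos d by (simp add: field_simps)
  qed
  have ev1: "eventually (\<lambda>n. 2 * real m / \<delta> \<le> Mw n) sequentially"
    using Mw_tend unfolding filterlim_at_top by blast
  have ev2: "eventually (\<lambda>n. m \<le> n) sequentially" by (rule eventually_ge_at_top)
  show ?thesis using ev1 ev2
  proof (rule eventually_elim2)
    fix n assume n1: "2 * real m / \<delta> \<le> Mw n" and n2: "m \<le> n"
    have "mu (trunc Q n) \<le> mu (trunc Q (n - m)) + real m" by (rule mu_shift[OF Q_red])
    moreover have "mu (trunc Q (n - m)) \<le> \<delta> / 2 * Mw n"
    proof -
      have "Mw m * mu (trunc Q (n - m)) \<le> real (length w) * Mw (n - m + m)" by (rule Q_bound)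
      then have "mu (trunc Q (n - m)) \<le> real (length w) * Mw n / Mw m"
        using n2 Mpos by (simp add: field_simps)
      also have "\<dots> = (real (length w) / Mw m) * Mw n" by simp
      also have "\<dots> \<le> \<delta> / 2 * Mw n" using wm Mw_nonneg[of n] by (rule mult_right_mono)
      finally show ?thesis .
    qed
    moreover have "real m \<le> \<delta> / 2 * Mw n" using n1 d by (simp add: field_simps)
    ultimately show "mu (trunc Q n) \<le> \<delta> * Mw n" by simp
  qed
qed

end


context setting
begin

abbreviation "dd \<equiv> upper_density Cw S"

lemma dd_range: "0 \<le> dd" "dd \<le> 1"
  using ud_limsup(2,3)[OF Ssub] by auto

lemma dd_subseq: "\<exists>r. strict_mono r \<and> (\<lambda>i. mu (trunc S (r i)) / Mw (r i)) \<longlonglongrightarrow> dd"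
  by (rule ud_subseq[OF Ssub])

lemma reg_ev:
  assumes s: "s \<in> S" and d: "\<delta> > 0"
  shows "eventually (\<lambda>n. mu (trunc (S \<inter> Cs s) n) \<le> (dd + \<epsilon> + \<delta>) * mu (trunc (Cs s) n)) sequentially"
  by (rule ud_ev[OF _ reg[OF s] d]) blast

lemma Cs_upper: "mu (trunc (Cs s) n) \<le> (Mw n + 1) / base TYPE('a) ^ length s"
  unfolding Cs_eq by (rule scale_upper)

lemma le_from_ev:
  assumes lim: "(\<lambda>i. mu (trunc S (r i)) / Mw (r i)) \<longlonglongrightarrow> dd" and r: "strict_mono r"
    and ev: "eventually (\<lambda>n. mu (trunc S n) / Mw n \<le> B) sequentially"
  shows "dd \<le> B"
proof -
  obtain N where N: "\<And>n. n \<ge> N \<Longrightarrow> mu (trunc S n) / Mw n \<le> B"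
    using ev unfolding eventually_sequentially by blast
  have "\<forall>i\<ge>N. mu (trunc S (r i)) / Mw (r i) \<le> B"
    using N seq_suble[OF r] by (meson order_trans)
  then show ?thesis using LIMSEQ_le_const2[OF lim] by blast
qed

lemma stepA:
  assumes dpos: "dd > 0"
  shows "\<exists>F. finite F \<and> F \<subseteq> Fm \<and> dd / (dd + 2 * \<epsilon>) \<le> (\<Sum>s\<in>F. 1 / base TYPE('a) ^ length s)"
proof (rule ccontr)
  assume H0: "\<not> ?thesis"
  define r2 where "r2 = dd / (dd + 2 * \<epsilon>)"
  define f where "f F = (\<Sum>s\<in>F. 1 / base TYPE('a) ^ length s)" for F :: "'a letter list set"
  have H: "f F < r2" if "finite F" "F \<subseteq> Fm" for F
    using H0 that by (auto simp: f_def r2_def not_le)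
  have fnn: "0 \<le> f F" for F unfolding f_def using base_pos[where 'a='a] by (intro sum_nonneg) simp
  define X where "X = f ` {F. finite F \<and> F \<subseteq> Fm}"
  have Xne: "X \<noteq> {}" unfolding X_def by blast
  have Xbdd: "bdd_above X" unfolding X_def bdd_above_def using H by (blast intro: less_imp_le)
  define \<sigma> where "\<sigma> = Sup X"
  have fle: "f F \<le> \<sigma>" if "finite F" "F \<subseteq> Fm" for F
    unfolding \<sigma>_def by (rule cSup_upper[OF _ Xbdd]) (use that in \<open>auto simp: X_def\<close>)
  have \<sigma>le: "\<sigma> \<le> r2"
    unfolding \<sigma>_def by (rule cSup_least[OF Xne]) (auto simp: X_def intro: less_imp_le H)
  have \<sigma>0: "0 \<le> \<sigma>" using fle[of "{}"] by (simp add: f_def)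
  have r2lt: "r2 < 1" using dpos eps by (simp add: r2_def)
  obtain r where r: "strict_mono r" "(\<lambda>i. mu (trunc S (r i)) / Mw (r i)) \<longlonglongrightarrow> dd"
    using dd_subseq by blast
  have key: "dd \<le> ((dd + \<epsilon> + \<delta>) * \<sigma> + \<delta>) * (1 + \<delta>) + \<delta>" if d: "0 < \<delta>" "\<delta> \<le> 1" for \<delta>
  proof -
    have "\<sigma> - \<delta> < Sup X" using d by (simp add: \<sigma>_def)
    then obtain xx where xx: "xx \<in> X" "\<sigma> - \<delta> < xx" using less_cSup_iff[OF Xne Xbdd] by blast
    then obtain F0 where F0: "F0 \<in> {F. finite F \<and> F \<subseteq> Fm}" "\<sigma> - \<delta> < f F0"
      unfolding X_def by blast
    have F0f: "finite F0" and F0Fm: "F0 \<subseteq> Fm" using F0 by auto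
    have F0S: "F0 \<subseteq> S" using F0Fm by (auto simp: Fm_def)
    have tail: "f F \<le> \<delta>" if "finite F" "F \<subseteq> Fm" "F \<inter> F0 = {}" for F
    proof -
      have "f (F \<union> F0) = f F + f F0" unfolding f_def
        by (rule sum.union_disjoint) (use that F0f in auto)
      moreover have "f (F \<union> F0) \<le> \<sigma>" using that F0f F0Fm by (intro fle) auto
      ultimately show ?thesis using F0(2) by simp
    qed
    have E1: "eventually (\<lambda>n. \<forall>s\<in>F0. mu (trunc (S \<inter> Cs s) n) \<le> (dd + \<epsilon> + \<delta>) * mu (trunc (Cs s) n)) sequentially"
      using F0f by (rule eventually_ball_finite) (use reg_ev[OF _ d(1)] F0S in blast)
    have E2: "eventually (\<lambda>n. mu (trunc Q n) \<le> \<delta> * Mw n) sequentially" by (rule Q_small[OF d(1)])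
    have E3: "eventually (\<lambda>n. 1 / \<delta> \<le> Mw n) sequentially"
      using Mw_tend unfolding filterlim_at_top by blast
    define B where "B = ((dd + \<epsilon> + \<delta>) * \<sigma> + \<delta>) * (1 + \<delta>) + \<delta>"
    have "eventually (\<lambda>n. mu (trunc S n) / Mw n \<le> B) sequentially"
      using eventually_conj[OF E1 E2] E3
    proof (rule eventually_elim2)
      fix n
      assume e12: "(\<forall>s\<in>F0. mu (trunc (S \<inter> Cs s) n) \<le> (dd + \<epsilon> + \<delta>) * mu (trunc (Cs s) n)) \<and> mu (trunc Q n) \<le> \<delta> * Mw n"
        and e3: "1 / \<delta> \<le> Mw n"
      have e1: "\<forall>s\<in>F0. mu (trunc (S \<inter> Cs s) n) \<le> (dd + \<epsilon> + \<delta>) * mu (trunc (Cs s) n)"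
        and e2: "mu (trunc Q n) \<le> \<delta> * Mw n" using e12 by auto
      have Mpos: "Mw n > 0" using e3 d by (smt (verit) divide_pos_pos)
      have oneM: "1 \<le> \<delta> * Mw n" using e3 d by (simp add: field_simps)
      define Fn where "Fn = {s \<in> Fm. length s \<le> n}"
      have Fn_sub: "Fn \<subseteq> trunc S n" by (auto simp: Fn_def Fm_def trunc_def)
      have Fnf: "finite Fn" by (rule finite_subset[OF Fn_sub finite_trunc])
      have FnFm: "Fn \<subseteq> Fm" by (auto simp: Fn_def)
      define g where "g s = mu (trunc (S \<inter> Cs s) n)" for s
      have gnn: "0 \<le> g s" for s unfolding g_def by (rule mu_nonneg)
      have gC: "g s \<le> (Mw n + 1) / base TYPE('a) ^ length s" for s
        unfolding g_def by (rule order_trans[OF mu_mono_trunc Cs_upper]) blast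
      have cover: "trunc S n \<subseteq> (\<Union>s\<in>Fn. trunc (S \<inter> Cs s) n) \<union> trunc Q n"
      proof
        fix z assume z: "z \<in> trunc S n"
        show "z \<in> (\<Union>s\<in>Fn. trunc (S \<inter> Cs s) n) \<union> trunc Q n"
        proof (cases "z \<in> U")
          case False then show ?thesis using z by (auto simp: trunc_def Q_def)
        next
          case True
          then obtain s0 where s0: "s0 \<in> S" "z \<in> Cs s0" unfolding U_def by blast
          obtain s' where s': "s' \<in> Fm" "Cs s0 \<subseteq> Cs s'" using U1[OF s0(1)] by blast
          have zs': "z \<in> Cs s'" using s0(2) s'(2) by blast
          have "length (s' @ w) \<le> length z" by (rule cone_len[OF zs'])
          then have "length s' \<le> n" using z by (simp add: trunc_def)
          then have "s' \<in> Fn" using s'(1) by (simp add: Fn_def)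
          moreover have "z \<in> trunc (S \<inter> Cs s') n" using z zs' by (simp add: trunc_def)
          ultimately show ?thesis by blast
        qed
      qed
      have "mu (trunc S n) \<le> mu ((\<Union>s\<in>Fn. trunc (S \<inter> Cs s) n) \<union> trunc Q n)"
        unfolding mu_def
        by (rule sum_mono2[OF _ cover]) (use Fnf finite_trunc weight_nonneg in auto)
      also have "\<dots> \<le> mu (\<Union>s\<in>Fn. trunc (S \<inter> Cs s) n) + mu (trunc Q n)"
        by (rule mu_Un_le) (use Fnf finite_trunc in auto)
      also have "mu (\<Union>s\<in>Fn. trunc (S \<inter> Cs s) n) \<le> (\<Sum>s\<in>Fn. g s)"
        unfolding g_def by (rule mu_UN_le[OF Fnf finite_trunc])
      also have "(\<Sum>s\<in>Fn. g s) = (\<Sum>s\<in>Fn \<inter> F0. g s) + (\<Sum>s\<in>Fn - F0. g s)"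
        by (rule sum.Int_Diff[OF Fnf])
      also have "(\<Sum>s\<in>Fn \<inter> F0. g s) \<le> (\<Sum>s\<in>F0. g s)"
        by (rule sum_mono2[OF F0f]) (auto simp: gnn)
      also have "(\<Sum>s\<in>F0. g s) \<le> (\<Sum>s\<in>F0. (dd + \<epsilon> + \<delta>) * ((Mw n + 1) / base TYPE('a) ^ length s))"
      proof (rule sum_mono)
        fix s assume s: "s \<in> F0"
        have "g s \<le> (dd + \<epsilon> + \<delta>) * mu (trunc (Cs s) n)" using e1 s by (simp add: g_def)
        also have "\<dots> \<le> (dd + \<epsilon> + \<delta>) * ((Mw n + 1) / base TYPE('a) ^ length s)"
          using dd_range eps d by (intro mult_left_mono Cs_upper) auto
        finally show "g s \<le> (dd + \<epsilon> + \<delta>) * ((Mw n + 1) / base TYPE('a) ^ length s)" .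
      qed
      also have "\<dots> = (dd + \<epsilon> + \<delta>) * (Mw n + 1) * f F0"
        unfolding f_def by (simp add: sum_distrib_left)
      also have "\<dots> \<le> (dd + \<epsilon> + \<delta>) * (Mw n + 1) * \<sigma>"
        using fle[OF F0f F0Fm] dd_range eps d Mw_nonneg[of n] by (intro mult_left_mono) auto
      also have "(\<Sum>s\<in>Fn - F0. g s) \<le> (\<Sum>s\<in>Fn - F0. (Mw n + 1) / base TYPE('a) ^ length s)"
        by (rule sum_mono) (rule gC)
      also have "\<dots> = (Mw n + 1) * f (Fn - F0)" unfolding f_def by (simp add: sum_distrib_left)
      also have "\<dots> \<le> (Mw n + 1) * \<delta>"
        using tail[of "Fn - F0"] Fnf FnFm Mw_nonneg[of n] by (intro mult_left_mono) auto
      finally have "mu (trunc S n) \<le> ((dd + \<epsilon> + \<delta>) * \<sigma> + \<delta>) * (Mw n + 1) + \<delta> * Mw n"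
        using e2 by (simp add: algebra_simps)
      also have "\<dots> \<le> ((dd + \<epsilon> + \<delta>) * \<sigma> + \<delta>) * ((1 + \<delta>) * Mw n) + \<delta> * Mw n"
        using oneM dd_range eps d \<sigma>0 by (intro add_right_mono mult_left_mono) (auto simp: algebra_simps)
      also have "\<dots> = B * Mw n" by (simp add: B_def algebra_simps)
      finally show "mu (trunc S n) / Mw n \<le> B" using Mpos by (simp add: divide_le_eq)
    qed
    then show ?thesis unfolding B_def[symmetric] by (rule le_from_ev[OF r(2) r(1)])
  qed
  have "dd \<le> (dd + \<epsilon>) * \<sigma>"
  proof (rule field_le_epsilon)
    fix e :: real assume e: "0 < e"
    define K where "K = dd + \<epsilon> + 5"
    have K: "K > 0" using dd_range eps by (simp add: K_def)
    define \<delta> where "\<delta> = min 1 (e / K)"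
    have d: "0 < \<delta>" "\<delta> \<le> 1" using e K by (auto simp: \<delta>_def)
    have dK: "\<delta> * K \<le> e" using K by (simp add: \<delta>_def min_def field_simps)
    have \<sigma>1: "\<sigma> \<le> 1" using \<sigma>le r2lt by simp
    have h1: "\<delta> * \<sigma> \<le> \<delta>" using d \<sigma>1 by (simp add: mult_left_le)
    have h2: "\<delta> * ((dd + \<epsilon>) * \<sigma>) \<le> \<delta> * (dd + \<epsilon>)"
      using d \<sigma>1 \<sigma>0 dd_range eps by (intro mult_left_mono) (auto simp: mult_left_le)
    have h3: "\<delta> * \<delta> * \<sigma> \<le> \<delta>" using d \<sigma>1 \<sigma>0 by (smt (verit) mult_left_le mult_le_one mult_nonneg_nonneg)
    have h4: "\<delta> * \<delta> \<le> \<delta>" using d by (simp add: mult_left_le)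
    have eq: "((dd + \<epsilon> + \<delta>) * \<sigma> + \<delta>) * (1 + \<delta>) + \<delta>
        = (dd + \<epsilon>) * \<sigma> + (\<delta> * \<sigma> + \<delta> + \<delta> * ((dd + \<epsilon>) * \<sigma>) + \<delta> * \<delta> * \<sigma> + \<delta> * \<delta> + \<delta>)"
      by (simp add: algebra_simps)
    have "dd \<le> (dd + \<epsilon>) * \<sigma> + (\<delta> * \<sigma> + \<delta> + \<delta> * ((dd + \<epsilon>) * \<sigma>) + \<delta> * \<delta> * \<sigma> + \<delta> * \<delta> + \<delta>)"
      using key[OF d] eq by simp
    also have "\<dots> \<le> (dd + \<epsilon>) * \<sigma> + \<delta> * K"
      using h1 h2 h3 h4 by (simp add: K_def algebra_simps)
    also have "\<dots> \<le> (dd + \<epsilon>) * \<sigma> + e" using dK by simp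
    finally show "dd \<le> (dd + \<epsilon>) * \<sigma> + e" .
  qed
  also have "\<dots> \<le> (dd + \<epsilon>) * r2" using \<sigma>le dd_range eps by (intro mult_left_mono) auto
  also have "\<dots> < dd"
  proof -
    have "(dd + \<epsilon>) * dd < (dd + 2 * \<epsilon>) * dd" using dpos eps by simp
    then show ?thesis using dpos eps by (simp add: r2_def field_simps)
  qed
  finally show False by simp
qed

end


context setting
begin

definition "P j = {fprod xs | xs. xs \<noteq> [] \<and> length xs \<le> Suc j \<and> set xs \<subseteq> S}"

lemma fprod_single: "a \<in> G \<Longrightarrow> fprod [a] = a"
  by (simp add: fprod_def fmult_def reduce_reduced semiG_def)

lemma fprod_Cw: "xs \<noteq> [] \<Longrightarrow> set xs \<subseteq> Cw \<Longrightarrow> fprod xs \<in> Cw"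
proof (induction xs)
  case Nil then show ?case by simp
next
  case (Cons a xs)
  show ?case
  proof (cases "xs = []")
    case True
    then show ?thesis using Cons.prems Cw_G fprod_single[of a] by auto
  next
    case False
    then have t: "fprod xs \<in> Cw" using Cons by simp
    have a: "a \<in> Cw" using Cons.prems by simp
    have "fprod (a # xs) = fmult a (fprod xs)" by (simp add: fprod_def)
    also have "\<dots> = a @ fprod xs" by (rule fmult_Cw[OF a t])
    finally show ?thesis using Cw_mult[OF a t] by simp
  qed
qed

lemma fprod_Cons: "xs \<noteq> [] \<Longrightarrow> set (a # xs) \<subseteq> Cw \<Longrightarrow> fprod (a # xs) = a @ fprod xs"
proof -
  assume xs: "xs \<noteq> []" and s: "set (a # xs) \<subseteq> Cw"
  have t: "fprod xs \<in> Cw" using fprod_Cw[OF xs] s by simp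
  have "fprod (a # xs) = fmult a (fprod xs)" by (simp add: fprod_def)
  also have "\<dots> = a @ fprod xs" using fmult_Cw[OF _ t] s by simp
  finally show ?thesis .
qed

lemma P_Cw: "P j \<subseteq> Cw"
  unfolding P_def using fprod_Cw Ssub by blast

lemma S_P: "S \<subseteq> P j"
proof
  fix s assume s: "s \<in> S"
  have "fprod [s] = s" using s S_G fprod_single by blast
  then show "s \<in> P j" unfolding P_def using s by (intro CollectI exI[of _ "[s]"]) auto
qed

lemma P_step:
  assumes s: "s \<in> S" and t: "t \<in> P j"
  shows "s @ t \<in> P (Suc j)" and "Suc (Suc j) \<le> k \<Longrightarrow> s @ t \<notin> S"
proof -
  obtain xs where xs: "t = fprod xs" "xs \<noteq> []" "length xs \<le> Suc j" "set xs \<subseteq> S"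
    using t unfolding P_def by blast
  have e: "fprod (s # xs) = s @ t" using fprod_Cons[OF xs(2)] xs(1,4) s Ssub by auto
  show "s @ t \<in> P (Suc j)" unfolding P_def
    by (intro CollectI exI[of _ "s # xs"]) (use e xs s in auto)
  show "s @ t \<notin> S" if k: "Suc (Suc j) \<le> k"
  proof
    assume st: "s @ t \<in> S"
    have l: "2 \<le> length (s # xs)" "length (s # xs) \<le> k" using xs(2,3) k by (cases xs; auto)+
    have "\<not> (\<exists>ys z. length ys = length (s # xs) \<and> set ys \<subseteq> S \<and> z \<in> S \<and> fprod ys = z)"
      using spf l unfolding strongly_product_free_def by blast
    moreover have "set (s # xs) \<subseteq> S" using s xs(4) by simp
    ultimately show False using e st by blast
  qed
qed

lemma mass_ineq:
  assumes F: "finite F" "F \<subseteq> Fm" and k: "Suc (Suc j) \<le> k"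
  shows "mu (trunc S n) + (\<Sum>s\<in>F. mu (trunc ((\<lambda>a. s @ a) ` P j) n)) \<le> mu (trunc (P (Suc j)) n)"
proof -
  have FS: "F \<subseteq> S" using F(2) by (auto simp: Fm_def)
  define A where "A s = trunc ((\<lambda>a. s @ a) ` P j) n" for s
  have AC: "A s \<subseteq> Cs s" for s unfolding A_def Cs_eq trunc_def using P_Cw by blast
  have disj: "A s1 \<inter> A s2 = {}" if "s1 \<in> F" "s2 \<in> F" "s1 \<noteq> s2" for s1 s2
    using U2[of s1 s2] that F(2) AC[of s1] AC[of s2] by blast
  have disj0: "trunc S n \<inter> (\<Union>s\<in>F. A s) = {}"
    unfolding A_def trunc_def using P_step(2)[OF _ _ k] FS by blast
  have sub: "trunc S n \<union> (\<Union>s\<in>F. A s) \<subseteq> trunc (P (Suc j)) n"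
    unfolding A_def trunc_def using S_P P_step(1) FS by blast
  have "mu (trunc S n) + (\<Sum>s\<in>F. mu (A s)) = mu (trunc S n) + mu (\<Union>s\<in>F. A s)"
    unfolding mu_def by (subst sum.UNION_disjoint) (use F(1) disj in \<open>auto simp: A_def finite_trunc\<close>)
  also have "\<dots> = mu (trunc S n \<union> (\<Union>s\<in>F. A s))"
    unfolding mu_def by (rule sum.union_disjoint[symmetric]) (use F(1) disj0 in \<open>auto simp: A_def finite_trunc\<close>)
  also have "\<dots> \<le> mu (trunc (P (Suc j)) n)"
    unfolding mu_def by (rule sum_mono2[OF finite_trunc sub]) (simp add: weight_nonneg)
  finally show ?thesis by (simp add: A_def)
qed

lemma frac_id:
  assumes "0 \<le> a" "a \<le> M'"
  shows "c * (M' / M) * (a / M') = c * a / (M::real)"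
proof (cases "M' = 0")
  case True then have "a = 0" using assms by simp
  then show ?thesis using True by simp
next
  case False then show ?thesis by (simp add: field_simps)
qed

abbreviation "rS n \<equiv> mu (trunc S n) / Mw n"

lemma claim1:
  assumes F: "finite F" "F \<subseteq> Fm"
  shows "Suc j \<le> k \<Longrightarrow> Bnd (\<lambda>n. rS n) (\<lambda>n. Mw n) F length (base TYPE('a)) j n \<le> mu (trunc (P j) n) / Mw n"
proof (induction j arbitrary: n)
  case 0
  show ?case using mu_mono_trunc[OF S_P[of 0], of n] Mw_nonneg[of n] by (simp add: divide_right_mono)
next
  case (Suc j)
  let ?b = "base TYPE('a)"
  let ?B = "Bnd (\<lambda>n. rS n) (\<lambda>n. Mw n) F length ?b"
  have bpos: "\<And>s. ?b ^ length s > 0" using base_pos[where 'a='a] by simp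
  have "?B (Suc j) n = rS n + (\<Sum>s\<in>F. (1 / ?b ^ length s) * (Mw (n - length s) / Mw n) * ?B j (n - length s))"
    by simp
  also have "\<dots> \<le> rS n + (\<Sum>s\<in>F. (1 / ?b ^ length s) * (Mw (n - length s) / Mw n) * (mu (trunc (P j) (n - length s)) / Mw (n - length s)))"
  proof (intro add_left_mono sum_mono mult_left_mono)
    fix s
    show "?B j (n - length s) \<le> mu (trunc (P j) (n - length s)) / Mw (n - length s)"
      using Suc by simp
    show "0 \<le> 1 / ?b ^ length s * (Mw (n - length s) / Mw n)"
      using bpos[of s] Mw_nonneg by simp
  qed
  also have "\<dots> = rS n + (\<Sum>s\<in>F. (1 / ?b ^ length s) * mu (trunc (P j) (n - length s)) / Mw n)"
    by (intro arg_cong2[where f="(+)"] refl sum.cong frac_id mu_nonneg mu_mono_trunc P_Cw)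
  also have "\<dots> \<le> rS n + (\<Sum>s\<in>F. mu (trunc ((\<lambda>a. s @ a) ` P j) n) / Mw n)"
  proof (intro add_left_mono sum_mono divide_right_mono Mw_nonneg)
    fix s
    show "1 / ?b ^ length s * mu (trunc (P j) (n - length s)) \<le> mu (trunc ((\<lambda>a. s @ a) ` P j) n)"
      using scale_lower[of "P j" n s] by simp
  qed
  also have "\<dots> = (mu (trunc S n) + (\<Sum>s\<in>F. mu (trunc ((\<lambda>a. s @ a) ` P j) n))) / Mw n"
    by (simp add: add_divide_distrib sum_divide_distrib)
  also have "\<dots> \<le> mu (trunc (P (Suc j)) n) / Mw n"
    by (intro divide_right_mono mass_ineq[OF F Suc.prems] Mw_nonneg)
  finally show ?case .
qed

lemma rS_shift:
  assumes r: "strict_mono r" and lim: "(\<lambda>i. rS (r i)) \<longlonglongrightarrow> dd"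
  shows "(\<lambda>i. rS (r i - L)) \<longlonglongrightarrow> dd"
proof -
  have "(\<lambda>n. rS n - rS (n - L)) \<longlonglongrightarrow> 0"
  proof (rule slow_var[OF Mw_tend])
    show "\<And>n. Mw (n - L) \<le> Mw n" by (rule Mw_mono) simp
    show "\<And>n. Mw n \<le> Mw (n - L) + real L" by (rule Mw_shift)
    show "\<And>n. 0 \<le> mu (trunc S n)" by (rule mu_nonneg)
    show "\<And>n. mu (trunc S n) \<le> Mw n" by (rule mu_mono_trunc[OF Ssub])
    show "\<And>n. mu (trunc S (n - L)) \<le> mu (trunc S n)" by (rule mu_mono_n) simp
    show "\<And>n. mu (trunc S n) \<le> mu (trunc S (n - L)) + real L"
      by (rule mu_shift) (use Ssub Cw_red in blast)
  qed
  then have "((\<lambda>n. rS n - rS (n - L)) \<circ> r) \<longlonglongrightarrow> 0" using r by (rule LIMSEQ_subseq_LIMSEQ)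
  then have "(\<lambda>i. rS (r i) - (rS (r i) - rS (r i - L))) \<longlonglongrightarrow> dd - 0"
    using lim by (intro tendsto_diff) (auto simp: o_def)
  then show ?thesis by simp
qed

lemma M_shift_ratio:
  assumes r: "strict_mono r"
  shows "(\<lambda>i. Mw (r i - L - a) / Mw (r i - L)) \<longlonglongrightarrow> 1"
proof -
  have "(\<lambda>n. Mw (n - a) / Mw n) \<longlonglongrightarrow> 1"
  proof (rule ratio_to_1[OF Mw_tend])
    show "\<And>n. Mw (n - a) \<le> Mw n" by (rule Mw_mono) simp
    show "\<And>n. Mw n \<le> Mw (n - a) + real a" by (rule Mw_shift)
  qed
  moreover have "filterlim (\<lambda>i. r i - L) sequentially sequentially"
    by (rule filterlim_compose[OF filterlim_minus_const_nat_at_top filterlim_subseq[OF r]])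
  ultimately show ?thesis by (rule filterlim_compose)
qed

lemma stepB:
  assumes F: "finite F" "F \<subseteq> Fm"
  shows "dd * (\<Sum>i<k. (\<Sum>s\<in>F. 1 / base TYPE('a) ^ length s) ^ i) \<le> 1"
proof -
  obtain r where r: "strict_mono r" "(\<lambda>i. rS (r i)) \<longlonglongrightarrow> dd" using dd_subseq by blast
  define j where "j = k - 1"
  have kj: "Suc j = k" using k2 by (simp add: j_def)
  have lim: "(\<lambda>i. Bnd (\<lambda>n. rS n) (\<lambda>n. Mw n) F length (base TYPE('a)) j (r i - 0))
      \<longlonglongrightarrow> dd * (\<Sum>i<Suc j. (\<Sum>s\<in>F. 1 / base TYPE('a) ^ length s) ^ i)"
    by (rule Bnd_lim[OF rS_shift[OF r] M_shift_ratio[OF r(1)]])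
  have "\<forall>i\<ge>0. Bnd (\<lambda>n. rS n) (\<lambda>n. Mw n) F length (base TYPE('a)) j (r i - 0) \<le> 1"
  proof (intro allI impI)
    fix i :: nat
    have "Bnd (\<lambda>n. rS n) (\<lambda>n. Mw n) F length (base TYPE('a)) j (r i) \<le> mu (trunc (P j) (r i)) / Mw (r i)"
      using claim1[OF F] kj by simp
    also have "\<dots> \<le> 1" by (rule ratio_bounds(2)[OF P_Cw])
    finally show "Bnd (\<lambda>n. rS n) (\<lambda>n. Mw n) F length (base TYPE('a)) j (r i - 0) \<le> 1" by simp
  qed
  then have "dd * (\<Sum>i<Suc j. (\<Sum>s\<in>F. 1 / base TYPE('a) ^ length s) ^ i) \<le> 1"
    using LIMSEQ_le_const2[OF lim] by blast
  then show ?thesis using kj by simp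
qed

end


theorem lemma3p3:
  fixes x y :: "'a::finite letter" and w :: "'a letter list" and S :: "'a letter list set"
    and \<epsilon> :: real and k :: nat
  assumes "CARD('a) \<ge> 2"
    and "x \<noteq> inv_letter y"
    and "w \<in> semiG x y"
    and "\<epsilon> > 0"
    and "k \<ge> 2"
    and "S \<subseteq> coset w (semiG x y)"
    and "strongly_product_free k S"
    and "eps_regular x y \<epsilon> w S"
  shows "let d = upper_density (coset w (semiG x y)) S
         in d * (\<Sum>i<k. (d / (d + 2 * \<epsilon>)) ^ i) \<le> 1"
proof -
  note xy = assms(2) and wG = assms(3)
  have cw: "coset w (semiG x y) = cone x y w" by (rule coset_cone[OF xy wG])
  have Ssub: "S \<subseteq> cone x y w" using assms(6) cw by simp
  have reg: "upper_density (cone x y (s @ w)) (S \<inter> cone x y (s @ w))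
                  \<le> upper_density (cone x y w) S + \<epsilon>" if s: "s \<in> S" for s
  proof -
    obtain al where al: "al \<in> semiG x y" "s = w @ al" using s Ssub unfolding cone_def by auto
    have w': "al @ w \<in> semiG x y" using G_append[OF xy al(1) wG] .
    have fm: "fmult w (al @ w) = s @ w" using fmult_G[OF xy wG w'] al(2) by simp
    have sw: "s @ w \<in> semiG x y" using G_append[OF xy _ wG] Ssub cone_sub_G[OF xy wG] s by blast
    have "upper_density (coset (fmult w (al @ w)) (semiG x y)) (S \<inter> coset (fmult w (al @ w)) (semiG x y))
          \<le> upper_density (coset w (semiG x y)) S + \<epsilon>"
      using assms(8) w' unfolding eps_regular_def by blast
    then show ?thesis unfolding fm coset_cone[OF xy sw] cw .
  qed
  interpret setting x y w S \<epsilon> k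
    by unfold_locales (use assms Ssub reg in auto)
  define d where "d = upper_density (coset w (semiG x y)) S"
  have dd: "d = dd" unfolding d_def cw ..
  show ?thesis
    unfolding Let_def d_def[symmetric]
  proof (cases "d = 0")
    case True then show "d * (\<Sum>i<k. (d / (d + 2 * \<epsilon>)) ^ i) \<le> 1" by simp
  next
    case False
    then have dpos: "dd > 0" using dd dd_range by simp
    obtain F where F: "finite F" "F \<subseteq> Fm" "dd / (dd + 2 * \<epsilon>) \<le> (\<Sum>s\<in>F. 1 / base TYPE('a) ^ length s)"
      using stepA[OF dpos] by blast
    have r0: "0 \<le> dd / (dd + 2 * \<epsilon>)" using dpos assms(4) by simp
    have "dd * (\<Sum>i<k. (dd / (dd + 2 * \<epsilon>)) ^ i) \<le> dd * (\<Sum>i<k. (\<Sum>s\<in>F. 1 / base TYPE('a) ^ length s) ^ i)"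
      using dpos r0 F(3) by (intro mult_left_mono sum_mono power_mono) auto
    also have "\<dots> \<le> 1" by (rule stepB[OF F(1,2)])
    finally show "d * (\<Sum>i<k. (d / (d + 2 * \<epsilon>)) ^ i) \<le> 1" using dd by simp
  qed
qed


end
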